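(* Let $F_2$ be the free group on $\{x,y\}$ and let $\alpha$ be a Whitehead automorphism of $F_2$ of type (W2). Then exactly one of $\alpha \equiv 1$, $\alpha \equiv (\{x\}, y)$, $\alpha \equiv (\{x\}, y^{-1})$, $\alpha \equiv (\{y\}, x)$, $\alpha \equiv (\{y\}, x^{-1})$ holds.
   Context: Let $\Sigma=\{x,y\}$. A Whitehead automorphism of type (W2) is an automorphism $(S,a)$ determined by a set $S \subset \Sigma^{\pm 1}$ and a letter $a \in \Sigma^{\pm 1}$ with $a, a^{-1} \notin S$, acting on letters $c \in \Sigma^{\pm1}$ by: $c \mapsto ca$ if $c \in S$ and $c^{-1} \notin S$; $c \mapsto a^{-1}ca$ if $c, c^{-1} \in S$; $c \mapsto c$ if $c, c^{-1} \notin S$. A cyclic word is the set of all cyclic permutations of a cyclically reduced word; an automorphism acts on cyclic words by applying it to a representative and cyclically reducing. For automorphisms $\phi,\psi$, $\phi \equiv \psi$ means $\phi(w) = \psi(w)$ for every cyclic word $w$ in $F_2$. *)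

theory Defs
  imports Main
begin

text \<open>Alphabet Sigma = {x,y}; a letter of Sigma^{+-1} is a generator with a sign
  (True = positive exponent, False = inverse).\<close>
datatype gen = X | Y

type_synonym letter = "gen \<times> bool"
type_synonym word = "letter list"

definition inv_l :: "letter \<Rightarrow> letter" where
  "inv_l c = (fst c, \<not> snd c)"

definition lx :: letter where "lx = (X, True)"
definition ly :: letter where "ly = (Y, True)"

fun red_step :: "letter \<Rightarrow> word \<Rightarrow> word" where
  "red_step c [] = [c]"
| "red_step c (d # w) = (if d = inv_l c then w else c # d # w)"

definition free_reduce :: "word \<Rightarrow> word" where
  "free_reduce w = foldr red_step w []"

definition reduced :: "word \<Rightarrow> bool" where
  "reduced w \<longleftrightarrow> (\<forall>i. Suc i < length w \<longrightarrow> w ! Suc i \<noteq> inv_l (w ! i))"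

definition cyc_reduced :: "word \<Rightarrow> bool" where
  "cyc_reduced w \<longleftrightarrow> reduced w \<and> (w = [] \<or> last w \<noteq> inv_l (hd w))"

function cyc_reduce :: "word \<Rightarrow> word" where
  "cyc_reduce w = (if 2 \<le> length w \<and> last w = inv_l (hd w)
                   then cyc_reduce (butlast (tl w)) else w)"
  by pat_completeness auto
termination by (relation "measure length") auto

definition cyc_word :: "word \<Rightarrow> word set" where
  "cyc_word w = {rotate n w | n. True}"

definition apply_hom :: "(letter \<Rightarrow> word) \<Rightarrow> word \<Rightarrow> word" where
  "apply_hom \<phi> w = concat (map \<phi> w)"

definition act_cyc :: "(letter \<Rightarrow> word) \<Rightarrow> word \<Rightarrow> word set" where
  "act_cyc \<phi> w = cyc_word (cyc_reduce (free_reduce (apply_hom \<phi> w)))"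

definition cyc_equiv :: "(letter \<Rightarrow> word) \<Rightarrow> (letter \<Rightarrow> word) \<Rightarrow> bool" where
  "cyc_equiv \<phi> \<psi> \<longleftrightarrow> (\<forall>w. cyc_reduced w \<longrightarrow> act_cyc \<phi> w = act_cyc \<psi> w)"

definition id_aut :: "letter \<Rightarrow> word" where
  "id_aut c = [c]"

text \<open>Whitehead automorphism (S,a) of type (W2), given on all letters; the case
  c not in S, c^{-1} in S is forced by the homomorphism property: c |-> a^{-1} c.\<close>
definition wh2 :: "letter set \<Rightarrow> letter \<Rightarrow> letter \<Rightarrow> word" where
  "wh2 S a c =
     (if c \<in> S \<and> inv_l c \<notin> S then [c, a]
      else if c \<in> S \<and> inv_l c \<in> S then [inv_l a, c, a]
      else if c \<notin> S \<and> inv_l c \<notin> S then [c]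
      else [inv_l a, c])"

end

theory Submission
  imports Defs
begin

declare cyc_reduce.simps [simp del]

lemma inv_inv [simp]: "inv_l (inv_l c) = c"
  by (simp add: inv_l_def)

lemma inv_neq [simp]: "inv_l c \<noteq> c" "c \<noteq> inv_l c"
  by (auto simp: inv_l_def prod_eq_iff)

lemma inv_eq: "(c = inv_l d) = (d = inv_l c)"
  by (auto simp: inv_l_def prod_eq_iff)

lemma free_reduce_Nil [simp]: "free_reduce [] = []"
  by (simp add: free_reduce_def)

lemma free_reduce_Cons [simp]: "free_reduce (c # U) = red_step c (free_reduce U)"
  by (simp add: free_reduce_def)

lemma free_reduce_append: "free_reduce (U @ V) = foldr red_step U (free_reduce V)"
  by (simp add: free_reduce_def)

lemma reduced_Nil [simp]: "reduced []" and reduced_single [simp]: "reduced [c]"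
  by (auto simp: reduced_def)

lemma reduced_Cons2 [simp]: "reduced (c # d # w) = (d \<noteq> inv_l c \<and> reduced (d # w))"
  unfolding reduced_def
proof (intro iffI conjI allI impI)
  assume H: "\<forall>i. Suc i < length (c # d # w) \<longrightarrow> (c # d # w) ! Suc i \<noteq> inv_l ((c # d # w) ! i)"
  show "d \<noteq> inv_l c" using H[rule_format, of 0] by simp
  fix i assume "Suc i < length (d # w)"
  then show "(d # w) ! Suc i \<noteq> inv_l ((d # w) ! i)" using H[rule_format, of "Suc i"] by simp
next
  fix i
  assume H: "d \<noteq> inv_l c \<and> (\<forall>i. Suc i < length (d # w) \<longrightarrow> (d # w) ! Suc i \<noteq> inv_l ((d # w) ! i))"
    and "Suc i < length (c # d # w)"
  then show "(c # d # w) ! Suc i \<noteq> inv_l ((c # d # w) ! i)"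
    by (cases i) auto
qed

lemma reduced_tl: "reduced (c # w) \<Longrightarrow> reduced w"
  by (cases w) auto

lemma reduced_red_step: "reduced z \<Longrightarrow> reduced (red_step c z)"
  by (cases z) (auto dest: reduced_tl)

lemma reduced_free_reduce [simp]: "reduced (free_reduce U)"
  by (induction U) (auto intro: reduced_red_step)

lemma cancel_red: "reduced z \<Longrightarrow> red_step c (red_step (inv_l c) z) = z"
proof (cases z)
  case (Cons d z')
  assume r: "reduced z"
  show ?thesis
  proof (cases "d = c")
    case True
    then show ?thesis using r Cons by (cases z') auto
  qed (use Cons in auto)
qed simp

lemma cancel_fr [simp]:
  "red_step (g, True) (red_step (g, False) (free_reduce T)) = free_reduce T"
  "red_step (g, False) (red_step (g, True) (free_reduce T)) = free_reduce T"
  using cancel_red[of "free_reduce T" "(g,True)"] cancel_red[of "free_reduce T" "(g,False)"]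
  by (simp_all add: inv_l_def)

lemma cancel_z [simp]:
  "reduced z \<Longrightarrow> red_step (g, True) (red_step (g, False) z) = z"
  "reduced z \<Longrightarrow> red_step (g, False) (red_step (g, True) z) = z"
  using cancel_red[of z "(g,True)"] cancel_red[of z "(g,False)"]
  by (simp_all add: inv_l_def)

lemma G: "free_reduce (U @ c # inv_l c # V) = free_reduce (U @ V)"
  by (simp add: free_reduce_append cancel_red)

lemma FR: "free_reduce (U @ V) = free_reduce (free_reduce U @ V)"
proof (induction U)
  case (Cons c U')
  have "free_reduce ((c # U') @ V) = red_step c (free_reduce (free_reduce U' @ V))"
    using Cons by simp
  also have "\<dots> = free_reduce (red_step c (free_reduce U') @ V)"
  proof (cases "free_reduce U'")
    case (Cons d z')
    then show ?thesis
    proof (cases "d = inv_l c")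
      case True
      then show ?thesis using Cons G[of "[]" c "z' @ V"] by simp
    qed simp
  qed simp
  finally show ?case by simp
qed simp

lemma snoc_red:
  "reduced z \<Longrightarrow> free_reduce (z @ [c]) = (if z \<noteq> [] \<and> last z = inv_l c then butlast z else z @ [c])"
proof (induction z)
  case (Cons d z')
  have r': "reduced z'" using Cons.prems by (rule reduced_tl)
  note IH = Cons.IH and pr = Cons.prems
  show ?case
  proof (cases z')
    case Nil
    then show ?thesis by (auto simp: inv_l_def prod_eq_iff)
  next
    case (Cons e z'')
    note Cons2 = this
    have ne: "e \<noteq> inv_l d" using pr Cons2 by simp
    have IH': "free_reduce (z' @ [c]) = (if last z' = inv_l c then butlast z' else z' @ [c])"
      using IH[OF r'] Cons2 by simp
    show ?thesis
    proof (cases "last z' = inv_l c")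
      case True
      have "red_step d (butlast z') = d # butlast z'"
        using ne Cons2 by (cases z'') simp_all
      then show ?thesis using IH' True Cons2 by simp
    next
      case False
      then show ?thesis using IH' ne Cons2 by simp
    qed
  qed
qed simp

lemma cr_no: "\<not> (2 \<le> length w \<and> last w = inv_l (hd w)) \<Longrightarrow> cyc_reduce w = w"
  apply (subst cyc_reduce.simps) by (rule if_not_P)

lemma cr_yes: "2 \<le> length w \<Longrightarrow> last w = inv_l (hd w) \<Longrightarrow> cyc_reduce w = cyc_reduce (butlast (tl w))"
  by (subst cyc_reduce.simps) simp

lemma rot_Suc: "rotate m (rotate1 w) = rotate (Suc m) w"
  by (simp only: rotate1_rotate_swap[symmetric] rotate_Suc)

lemma rot_len: "rotate (n + length w) w = rotate n w"
  by (metis rotate_conv_mod mod_add_self2)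

lemma cyc_word_rotate1: "cyc_word (rotate1 w) = cyc_word w"
proof (cases "w = []")
  case False
  then obtain k where k: "length w = Suc k" by (cases w) auto
  show ?thesis
  proof
    show "cyc_word (rotate1 w) \<subseteq> cyc_word w"
      unfolding cyc_word_def rot_Suc by blast
  next
    show "cyc_word w \<subseteq> cyc_word (rotate1 w)"
    proof
      fix v assume "v \<in> cyc_word w"
      then obtain n where v: "v = rotate n w" unfolding cyc_word_def by auto
      have "rotate (n + k) (rotate1 w) = rotate n w"
        unfolding rot_Suc using rot_len[of n w] k by simp
      then have "\<exists>m. v = rotate m (rotate1 w) \<and> True" unfolding v by metis
      then show "v \<in> cyc_word (rotate1 w)" unfolding cyc_word_def by simp
    qed
  qed
qed simp

lemma reduced_mid: "reduced (u @ p # q # v) \<Longrightarrow> q \<noteq> inv_l p"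
  unfolding reduced_def
  by (drule spec[of _ "length u"]) (simp add: nth_append)

definition K :: "word \<Rightarrow> word set" where
  "K w = cyc_word (cyc_reduce (free_reduce w))"

lemma core:
  assumes r: "reduced z"
  shows "cyc_word (cyc_reduce (red_step c z)) =
         cyc_word (cyc_reduce (if z \<noteq> [] \<and> last z = inv_l c then butlast z else z @ [c]))"
proof (cases z)
  case Nil then show ?thesis by simp
next
  case (Cons h t)
  show ?thesis
  proof (cases "h = inv_l c")
    case hT: True
    show ?thesis
    proof (cases "last z = inv_l c")
      case lT: True
      show ?thesis
      proof (cases t rule: rev_cases)
        case Nil
        then show ?thesis using Cons hT by simp
      next
        case (snoc t' e)
        have e: "e = inv_l c" using lT Cons snoc by simp
        have z: "z = inv_l c # t' @ [inv_l c]" using Cons snoc hT e by simp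
        have A: "cyc_reduce (t' @ [inv_l c]) = t' @ [inv_l c]"
        proof (rule cr_no, cases t')
          case (Cons f t'')
          have "f \<noteq> c" using reduced_mid[of "[]" "inv_l c" f "t'' @ [inv_l c]"] r z Cons by simp
          then show "\<not> (2 \<le> length (t' @ [inv_l c]) \<and> last (t' @ [inv_l c]) = inv_l (hd (t' @ [inv_l c])))"
            using Cons by (auto simp: inv_l_def prod_eq_iff)
        qed simp
        have B: "cyc_reduce (inv_l c # t') = inv_l c # t'"
        proof (rule cr_no, cases t' rule: rev_cases)
          case (snoc t'' f)
          have "inv_l c \<noteq> inv_l f" using reduced_mid[of "inv_l c # t''" f "inv_l c" "[]"] r z snoc by simp
          then show "\<not> (2 \<le> length (inv_l c # t') \<and> last (inv_l c # t') = inv_l (hd (inv_l c # t')))"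
            using snoc by (auto simp: inv_l_def prod_eq_iff)
        qed simp
        have "red_step c z = t' @ [inv_l c]" using z by simp
        moreover have "butlast z = inv_l c # t'" using z by simp
        ultimately show ?thesis using A B lT Cons cyc_word_rotate1[of "inv_l c # t'"] by simp
      qed
    next
      case lF: False
      have "cyc_reduce (z @ [c]) = cyc_reduce t"
        using cr_yes[of "z @ [c]"] Cons hT by simp
      then show ?thesis using lF Cons hT by simp
    qed
  next
    case hF: False
    show ?thesis
    proof (cases "last z = inv_l c")
      case lT: True
      have "cyc_reduce (c # z) = cyc_reduce (butlast z)"
        using cr_yes[of "c # z"] Cons lT by simp
      then show ?thesis using lT Cons hF by simp
    next
      case lF: False
      have A: "cyc_reduce (c # z) = c # z" by (rule cr_no) (use lF Cons in \<open>auto simp: inv_l_def prod_eq_iff\<close>)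
      have B: "cyc_reduce (z @ [c]) = z @ [c]" by (rule cr_no) (use hF Cons in \<open>auto simp: inv_l_def prod_eq_iff\<close>)
      show ?thesis using A B lF hF Cons cyc_word_rotate1[of "c # z"] by simp
    qed
  qed
qed

lemma K_rot: "K (c # U) = K (U @ [c])"
proof -
  have "free_reduce (U @ [c]) = free_reduce (free_reduce U @ [c])" by (rule FR)
  also have "\<dots> = (if free_reduce U \<noteq> [] \<and> last (free_reduce U) = inv_l c then butlast (free_reduce U) else free_reduce U @ [c])"
    by (simp add: snoc_red)
  finally have E: "free_reduce (U @ [c]) = (if free_reduce U \<noteq> [] \<and> last (free_reduce U) = inv_l c then butlast (free_reduce U) else free_reduce U @ [c])" .
  show ?thesis unfolding K_def free_reduce_Cons E by (rule core[OF reduced_free_reduce])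
qed

lemma conj_equiv:
  assumes H: "\<And>l T. free_reduce (\<phi> l @ inv_l a # T) = free_reduce (inv_l a # \<psi> l @ T)"
  shows "cyc_equiv \<phi> \<psi>"
proof -
  have E: "free_reduce (apply_hom \<phi> w) = free_reduce (inv_l a # apply_hom \<psi> w @ [a])" for w
  proof (induction w)
    case Nil
    show ?case using G[of "[]" "inv_l a" "[]"] by (simp add: apply_hom_def)
  next
    case (Cons l w)
    have "free_reduce (apply_hom \<phi> (l # w)) = foldr red_step (\<phi> l) (free_reduce (apply_hom \<phi> w))"
      by (simp add: apply_hom_def free_reduce_append)
    also have "\<dots> = free_reduce (\<phi> l @ inv_l a # apply_hom \<psi> w @ [a])"
      using Cons by (simp add: free_reduce_append)
    also have "\<dots> = free_reduce (inv_l a # \<psi> l @ apply_hom \<psi> w @ [a])" by (rule H)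
    finally show ?case by (simp add: apply_hom_def)
  qed
  have "K (apply_hom \<phi> w) = K (apply_hom \<psi> w)" for w
  proof -
    have "K (apply_hom \<phi> w) = K (inv_l a # apply_hom \<psi> w @ [a])" unfolding K_def E ..
    also have "\<dots> = K ((apply_hom \<psi> w @ [a]) @ [inv_l a])" by (rule K_rot)
    also have "\<dots> = K (apply_hom \<psi> w)" unfolding K_def using G[of "apply_hom \<psi> w" a "[]"] by simp
    finally show ?thesis .
  qed
  then show ?thesis unfolding cyc_equiv_def act_cyc_def K_def by simp
qed

lemma caseC:
  assumes "fst c \<noteq> fst a" "snd c"
  shows "cyc_equiv (wh2 {inv_l c} a) (wh2 {c} (inv_l a))"
proof (rule conj_equiv[where a=a])
  fix l :: letter and T :: word
  obtain gc bc where c: "c = (gc,bc)" by (cases c)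
  obtain ga ba where a: "a = (ga,ba)" by (cases a)
  obtain gl bl where l: "l = (gl,bl)" by (cases l)
  show "free_reduce (wh2 {inv_l c} a l @ inv_l a # T) = free_reduce (inv_l a # wh2 {c} (inv_l a) l @ T)"
    using assms unfolding c a l
    by (cases gc; cases ga; cases gl; cases ba; cases bl)
       (simp_all add: wh2_def inv_l_def reduced_red_step)
qed

lemma caseD:
  assumes "fst c \<noteq> fst a" "snd c"
  shows "cyc_equiv (wh2 {c, inv_l c} a) id_aut"
proof (rule conj_equiv[where a=a])
  fix l :: letter and T :: word
  obtain gc bc where c: "c = (gc,bc)" by (cases c)
  obtain ga ba where a: "a = (ga,ba)" by (cases a)
  obtain gl bl where l: "l = (gl,bl)" by (cases l)
  show "free_reduce (wh2 {c, inv_l c} a l @ inv_l a # T) = free_reduce (inv_l a # id_aut l @ T)"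
    using assms unfolding c a l
    by (cases gc; cases ga; cases gl; cases ba; cases bl)
       (simp_all add: wh2_def inv_l_def id_aut_def reduced_red_step)
qed

lemma cyc_equiv_refl: "cyc_equiv f f"
  by (simp add: cyc_equiv_def)

lemma cyc_equiv_trans_sym: "cyc_equiv f g \<Longrightarrow> cyc_equiv f h \<Longrightarrow> cyc_equiv g h"
  by (simp add: cyc_equiv_def)

lemma wh2_empty: "wh2 {} a = id_aut"
  by (rule ext) (simp add: wh2_def id_aut_def)

definition TL :: "(letter \<Rightarrow> word) list" where
  "TL = [id_aut, wh2 {lx} ly, wh2 {lx} (inv_l ly), wh2 {ly} lx, wh2 {ly} (inv_l lx)]"

lemma len_TL: "length TL = 5" by (simp add: TL_def)

lemma inTL: "ga \<noteq> gc \<Longrightarrow> \<exists>i<5. TL ! i = wh2 {(gc,True)} (ga,b)"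
proof -
  assume "ga \<noteq> gc"
  then have "wh2 {(gc,True)} (ga,b) \<in> set TL"
    by (cases ga; cases gc; cases b) (simp_all add: TL_def lx_def ly_def inv_l_def)
  then show ?thesis unfolding in_set_conv_nth len_TL by metis
qed

lemma id_inTL: "TL ! 0 = id_aut" by (simp add: TL_def)

lemma sub2: "S \<subseteq> {p, q} \<Longrightarrow> S = {} \<or> S = {p} \<or> S = {q} \<or> S = {p, q}"
  by blast

lemma existence:
  assumes "a \<notin> S" and "inv_l a \<notin> S"
  shows "\<exists>i<5. cyc_equiv (wh2 S a) (TL ! i)"
proof -
  obtain ga ba where a: "a = (ga, ba)" by (cases a)
  define gc where "gc = (if ga = X then Y else X)"
  define c where "c = (gc, True)"
  have ne: "ga \<noteq> gc" unfolding gc_def by (cases ga) simp_all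
  have fc: "fst c \<noteq> fst a" "snd c" using ne unfolding c_def a by simp_all
  have "S \<subseteq> {c, inv_l c}"
  proof
    fix l assume lS: "l \<in> S"
    obtain gl bl where l: "l = (gl, bl)" by (cases l)
    have "l \<noteq> a" "l \<noteq> inv_l a" using lS assms by auto
    then show "l \<in> {c, inv_l c}"
      unfolding l a c_def gc_def inv_l_def
      by (cases gl; cases ga; cases bl; cases ba) simp_all
  qed
  then consider "S = {}" | "S = {c}" | "S = {inv_l c}" | "S = {c, inv_l c}"
    using sub2 by blast
  then show ?thesis
  proof cases
    case 1
    then show ?thesis using id_inTL wh2_empty cyc_equiv_refl by (metis zero_less_numeral)
  next
    case 2
    then show ?thesis using inTL[OF ne, of ba] cyc_equiv_refl unfolding c_def a by metis
  next
    case 3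
    have "cyc_equiv (wh2 S a) (wh2 {c} (inv_l a))" using caseC[OF fc] 3 by simp
    moreover have "inv_l a = (ga, \<not> ba)" unfolding a inv_l_def by simp
    ultimately show ?thesis using inTL[OF ne, of "\<not> ba"] unfolding c_def by metis
  next
    case 4
    have "cyc_equiv (wh2 S a) id_aut" using caseD[OF fc] 4 by simp
    then show ?thesis using id_inTL by (metis zero_less_numeral)
  qed
qed

lemma cyc_reduced_single: "cyc_reduced [l]"
  by (simp add: cyc_reduced_def)

lemma act_single: "act_cyc f [l] = cyc_word (cyc_reduce (free_reduce (f l)))"
  by (simp add: act_cyc_def apply_hom_def)

lemma cw1: "cyc_word [p] = {[p]}"
  by (simp add: cyc_word_def)

lemma cw2: "cyc_word [p, q] = {[p, q], [q, p]}"
proof -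
  have "rotate n [p, q] = (if even n then [p, q] else [q, p])" for n
    by (induction n) auto
  note R = this
  show ?thesis unfolding cyc_word_def
  proof (rule set_eqI, rule iffI)
    fix x assume "x \<in> {rotate n [p, q] |n. True}"
    then obtain n where "x = rotate n [p, q]" by blast
    then show "x \<in> {[p, q], [q, p]}" using R[of n] by (cases "even n") simp_all
  next
    fix x assume "x \<in> {[p, q], [q, p]}"
    then have "x = rotate 0 [p, q] \<or> x = rotate 1 [p, q]" by auto
    then show "x \<in> {rotate n [p, q] |n. True}" by blast
  qed
qed

lemma uniqueness:
  assumes "i < 5" "j < 5" "cyc_equiv (TL ! i) (TL ! j)"
  shows "i = j"
proof -
  have ex: "act_cyc (TL ! i) [lx] = act_cyc (TL ! j) [lx]" "act_cyc (TL ! i) [ly] = act_cyc (TL ! j) [ly]"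
    using assms(3) cyc_reduced_single unfolding cyc_equiv_def by blast+
  have i5: "i = 0 \<or> i = 1 \<or> i = 2 \<or> i = 3 \<or> i = 4" using assms(1) by linarith
  have j5: "j = 0 \<or> j = 1 \<or> j = 2 \<or> j = 3 \<or> j = 4" using assms(2) by linarith
  show ?thesis using i5 j5 ex
    by (elim disjE)
       (simp_all add: act_single TL_def wh2_def id_aut_def lx_def ly_def inv_l_def cr_no cw1 cw2
          doubleton_eq_iff)
qed

theorem lemma2p1:
  fixes S :: "letter set" and a :: letter
  assumes "a \<notin> S" and "inv_l a \<notin> S"
  shows "\<exists>!i. i < 5 \<and> cyc_equiv (wh2 S a)
           ([id_aut, wh2 {lx} ly, wh2 {lx} (inv_l ly), wh2 {ly} lx, wh2 {ly} (inv_l lx)] ! i)"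
proof -
  obtain i where i: "i < 5" "cyc_equiv (wh2 S a) (TL ! i)" using existence[OF assms] by blast
  show ?thesis unfolding TL_def[symmetric]
  proof (rule ex1I[of _ i])
    show "i < 5 \<and> cyc_equiv (wh2 S a) (TL ! i)" using i by simp
  next
    fix j assume "j < 5 \<and> cyc_equiv (wh2 S a) (TL ! j)"
    then show "j = i" using uniqueness[of j i] i cyc_equiv_trans_sym by blast
  qed
qed

end
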